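(* The $\mathbb Z\mathcal I$-modules $V_o$, $\wedge^2\mathbb Z^{\mathcal K}$, $E_o=\wedge^2 V_o$, $W_o$ and $\wedge^2 W_o$ are all principal, i.e., each is generated as a $\mathbb Z\mathcal I$-module by a single element.
   Context: $\mathcal I\subset\mathrm{SO}(3)$ is the rotation group of a regular dodecahedron $D$ ($\mathcal I\cong A_5$). $\mathcal K$ is the 5-element set of cubes inscribed in $D$, on which $\mathcal I$ acts as the group of even permutations; $\mathcal L$ is the 6-element set of pairs of opposite faces of $D$, with its natural (transitive) $\mathcal I$-action. $\mathbb Z^{\mathcal K}$ and $\mathbb Z^{\mathcal L}$ are the corresponding permutation modules. $V_o:=\mathbb Z^{\mathcal K}/\mathbb Z(\sum_{e\in\mathcal K}e)$, $W_o:=\mathbb Z^{\mathcal L}/\mathbb Z(\sum_{l\in\mathcal L}l)$, $E_o:=\wedge^2V_o$. *)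

theory Defs
  imports "HOL-Combinatorics.Permutations"
begin

text \<open>The 5 cubes inscribed in D are labelled 0..4; I acts on them as the group of
  even permutations, so we take I to be A5 acting on {0..<5}.\<close>

definition cubes :: "nat set" where
  "cubes = {0..<5}"

definition Ico :: "(nat \<Rightarrow> nat) set" where
  "Ico = {p. p permutes cubes \<and> evenperm p}"

definition act_K :: "(nat \<Rightarrow> nat) \<Rightarrow> nat \<Rightarrow> nat" where
  "act_K p k = p k"

text \<open>Pairs of opposite faces of D correspond I-equivariantly to the axes through
  face centres, hence to the cyclic subgroups of order 5 of I (rotations about that
  axis).\<close>

definition faces :: "(nat \<Rightarrow> nat) set set" where
  "faces = {H. H \<subseteq> Ico \<and> card H = 5 \<and> id \<in> H \<and> (\<forall>a\<in>H. \<forall>b\<in>H. a \<circ> b \<in> H)}"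

definition act_L :: "(nat \<Rightarrow> nat) \<Rightarrow> (nat \<Rightarrow> nat) set \<Rightarrow> (nat \<Rightarrow> nat) set" where
  "act_L p H = (\<lambda>h. p \<circ> h \<circ> inv p) ` H"

inductive_set zspan :: "('x \<Rightarrow> int) set \<Rightarrow> ('x \<Rightarrow> int) set" for S where
  zero: "(\<lambda>_. 0) \<in> zspan S"
| gen: "v \<in> S \<Longrightarrow> v \<in> zspan S"
| add: "a \<in> zspan S \<Longrightarrow> b \<in> zspan S \<Longrightarrow> (\<lambda>x. a x + b x) \<in> zspan S"
| neg: "a \<in> zspan S \<Longrightarrow> (\<lambda>x. - a x) \<in> zspan S"

definition permmod :: "'x set \<Rightarrow> ('x \<Rightarrow> int) set" where
  "permmod X = {f. \<forall>x. x \<notin> X \<longrightarrow> f x = 0}"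

definition pm_act :: "'x set \<Rightarrow> ((nat \<Rightarrow> nat) \<Rightarrow> 'x \<Rightarrow> 'x) \<Rightarrow> (nat \<Rightarrow> nat) \<Rightarrow> ('x \<Rightarrow> int) \<Rightarrow> ('x \<Rightarrow> int)" where
  "pm_act X act g f = (\<lambda>x. if x \<in> X then f (act (inv g) x) else 0)"

definition sumvec :: "'x set \<Rightarrow> 'x \<Rightarrow> int" where
  "sumvec X = (\<lambda>x. if x \<in> X then 1 else 0)"

text \<open>Exterior square of the free module Z^X: f \<and> g is realised as the alternating
  function (x,y) |-> f x * g y - f y * g x on X \<times> X (i.e. e_x \<and> e_y corresponds to
  delta_(x,y) - delta_(y,x)); wedge2 X is the span of all f \<and> g.\<close>
definition wedge :: "'x set \<Rightarrow> ('x \<Rightarrow> int) \<Rightarrow> ('x \<Rightarrow> int) \<Rightarrow> ('x \<times> 'x \<Rightarrow> int)" where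
  "wedge X f g = (\<lambda>(x, y). if x \<in> X \<and> y \<in> X then f x * g y - f y * g x else 0)"

definition wedge2 :: "'x set \<Rightarrow> ('x \<times> 'x \<Rightarrow> int) set" where
  "wedge2 X = zspan {wedge X f g | f g. f \<in> permmod X \<and> g \<in> permmod X}"

definition w2_act :: "'x set \<Rightarrow> ((nat \<Rightarrow> nat) \<Rightarrow> 'x \<Rightarrow> 'x) \<Rightarrow> (nat \<Rightarrow> nat) \<Rightarrow> ('x \<times> 'x \<Rightarrow> int) \<Rightarrow> ('x \<times> 'x \<Rightarrow> int)" where
  "w2_act X act g a = (\<lambda>(x, y). if x \<in> X \<and> y \<in> X then a (act (inv g) x, act (inv g) y) else 0)"

text \<open>Principality of a quotient ZG-module M/N (N a submodule of M, with action rho):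
  some v in M whose G-orbit generates M/N, i.e. orbit(v) together with N spans M.\<close>
definition principal_quot :: "(nat \<Rightarrow> nat) set \<Rightarrow> ((nat \<Rightarrow> nat) \<Rightarrow> ('y \<Rightarrow> int) \<Rightarrow> ('y \<Rightarrow> int))
    \<Rightarrow> ('y \<Rightarrow> int) set \<Rightarrow> ('y \<Rightarrow> int) set \<Rightarrow> bool" where
  "principal_quot G rho M N \<longleftrightarrow> (\<exists>v\<in>M. zspan ({rho g v | g. g \<in> G} \<union> N) = M)"

definition principal_mod :: "(nat \<Rightarrow> nat) set \<Rightarrow> ((nat \<Rightarrow> nat) \<Rightarrow> ('y \<Rightarrow> int) \<Rightarrow> ('y \<Rightarrow> int))
    \<Rightarrow> ('y \<Rightarrow> int) set \<Rightarrow> bool" where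
  "principal_mod G rho M \<longleftrightarrow> (\<exists>v\<in>M. zspan {rho g v | g. g \<in> G} = M)"

text \<open>V_o = Z^K / Z(sum), as quotient data (M, N).\<close>
definition Vo_num :: "(nat \<Rightarrow> int) set" where "Vo_num = permmod cubes"
definition Vo_den :: "(nat \<Rightarrow> int) set" where "Vo_den = zspan {sumvec cubes}"

text \<open>E_o = \<wedge>^2 V_o = \<wedge>^2 Z^K / (s \<wedge> Z^K), s = sum of the basis (right exactness of \<wedge>^2).\<close>
definition Eo_den :: "(nat \<times> nat \<Rightarrow> int) set" where
  "Eo_den = zspan {wedge cubes (sumvec cubes) f | f. f \<in> permmod cubes}"

definition Wo_num :: "((nat \<Rightarrow> nat) set \<Rightarrow> int) set" where "Wo_num = permmod faces"
definition Wo_den :: "((nat \<Rightarrow> nat) set \<Rightarrow> int) set" where "Wo_den = zspan {sumvec faces}"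

definition W2o_den :: "((nat \<Rightarrow> nat) set \<times> (nat \<Rightarrow> nat) set \<Rightarrow> int) set" where
  "W2o_den = zspan {wedge faces (sumvec faces) f | f. f \<in> permmod faces}"

end

theory Submission
  imports Defs "HOL-Algebra.Multiplicative_Group"
begin

lemma zspan_closed_sub:
  assumes "S \<subseteq> T" "(\<lambda>_. 0) \<in> T" "\<And>a b. a \<in> T \<Longrightarrow> b \<in> T \<Longrightarrow> (\<lambda>x. a x + b x) \<in> T"
    "\<And>a. a \<in> T \<Longrightarrow> (\<lambda>x. - a x) \<in> T"
  shows "zspan S \<subseteq> T"
proof
  fix v assume "v \<in> zspan S" then show "v \<in> T"
    by induct (use assms in blast)+
qed

lemma zspan_mono_span: "S \<subseteq> zspan T \<Longrightarrow> zspan S \<subseteq> zspan T"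
  by (rule zspan_closed_sub[OF _ zspan.zero zspan.add zspan.neg])

lemma zspan_mono: "S \<subseteq> T \<Longrightarrow> zspan S \<subseteq> zspan T"
  by (rule zspan_mono_span) (blast intro: zspan.gen)

lemma zspan_smult_nat: "a \<in> zspan S \<Longrightarrow> (\<lambda>x. int n * a x) \<in> zspan S"
proof (induct n)
  case 0 then show ?case using zspan.zero by simp
next
  case (Suc n)
  have "(\<lambda>x. (\<lambda>x. int n * a x) x + a x) \<in> zspan S" using Suc by (intro zspan.add) auto
  then show ?case by (simp add: algebra_simps)
qed

lemma zspan_smult: assumes "a \<in> zspan S" shows "(\<lambda>x. c * a x) \<in> zspan S"
proof (cases "c \<ge> 0")
  case True
  then have "c = int (nat c)" by simp
  then obtain n where "c = int n" by blast
  then show ?thesis using zspan_smult_nat assms by auto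
next
  case False
  then have "c = - int (nat (- c))" by simp
  then obtain n where n: "c = - int n" by blast
  from assms have "(\<lambda>x. - (\<lambda>x. int n * a x) x) \<in> zspan S" by (intro zspan.neg zspan_smult_nat)
  then show ?thesis using n by simp
qed

lemma zspan_sum:
  assumes "finite I" "\<And>i. i \<in> I \<Longrightarrow> b i \<in> zspan S"
  shows "(\<lambda>x. \<Sum>i\<in>I. c i * b i x) \<in> zspan S"
  using assms
proof (induct I rule: finite_induct)
  case empty then show ?case using zspan.zero by simp
next
  case (insert j I)
  have "(\<lambda>x. (\<lambda>x. c j * b j x) x + (\<lambda>x. \<Sum>i\<in>I. c i * b i x) x) \<in> zspan S"
    using insert by (intro zspan.add zspan_smult) auto
  then show ?case using insert by simp
qed

definition ind :: "'x \<Rightarrow> 'x \<Rightarrow> int" where "ind a = (\<lambda>x. if x = a then 1 else 0)"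

lemma permmod_span:
  assumes "finite X"
  shows "permmod X = zspan {ind x | x. x \<in> X}"
proof
  show "zspan {ind x | x. x \<in> X} \<subseteq> permmod X"
    by (rule zspan_closed_sub) (auto simp: permmod_def ind_def)
  show "permmod X \<subseteq> zspan {ind x | x. x \<in> X}"
  proof
    fix f assume f: "f \<in> permmod X"
    have "(\<lambda>p. \<Sum>x\<in>X. f x * ind x p) \<in> zspan {ind x | x. x \<in> X}"
      using assms by (intro zspan_sum) (auto intro: zspan.gen)
    moreover have "(\<lambda>p. \<Sum>x\<in>X. f x * ind x p) = f"
    proof
      fix p show "(\<Sum>x\<in>X. f x * ind x p) = f p"
        using f assms by (cases "p \<in> X") (auto simp: ind_def permmod_def if_distrib sum.delta' cong: if_cong)
    qed
    ultimately show "f \<in> zspan {ind x | x. x \<in> X}" by simp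
  qed
qed

lemma wedge_cong:
  "(\<And>x. x \<in> X \<Longrightarrow> f x = f' x) \<Longrightarrow> (\<And>x. x \<in> X \<Longrightarrow> g x = g' x) \<Longrightarrow> wedge X f g = wedge X f' g'"
  by (auto simp: wedge_def fun_eq_iff)

lemma wedge_antisym: "wedge X f g = (\<lambda>p. - wedge X g f p)"
  by (auto simp: wedge_def fun_eq_iff)

lemma wedge_self: "wedge X f f = (\<lambda>_. 0)"
  by (auto simp: wedge_def fun_eq_iff)

lemma wedge2_span:
  assumes "finite X"
  shows "wedge2 X = zspan {wedge X (ind x) (ind y) | x y. x \<in> X \<and> y \<in> X}"
proof
  show "zspan {wedge X (ind x) (ind y) | x y. x \<in> X \<and> y \<in> X} \<subseteq> wedge2 X"
    unfolding wedge2_def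
  proof (rule zspan_mono, safe)
    fix x y assume "x \<in> X" "y \<in> X"
    then have "ind x \<in> permmod X" "ind y \<in> permmod X" by (auto simp: permmod_def ind_def)
    then show "\<exists>f g. wedge X (ind x) (ind y) = wedge X f g \<and> f \<in> permmod X \<and> g \<in> permmod X" by blast
  qed
  show "wedge2 X \<subseteq> zspan {wedge X (ind x) (ind y) | x y. x \<in> X \<and> y \<in> X}"
    unfolding wedge2_def
  proof (rule zspan_mono_span, safe)
    fix f g assume f: "f \<in> permmod X" and g: "g \<in> permmod X"
    let ?B = "{wedge X (ind x) (ind y) | x y. x \<in> X \<and> y \<in> X}"
    have "(\<lambda>p. \<Sum>x\<in>X. f x * (\<lambda>p. \<Sum>y\<in>X. g y * wedge X (ind x) (ind y) p) p) \<in> zspan ?B"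
      using assms by (intro zspan_sum) (auto intro: zspan.gen)
    moreover have "(\<lambda>p. \<Sum>x\<in>X. f x * (\<lambda>p. \<Sum>y\<in>X. g y * wedge X (ind x) (ind y) p) p) = wedge X f g"
    proof
      fix p :: "'a \<times> 'a"
      obtain u v where p: "p = (u, v)" by force
      show "(\<Sum>x\<in>X. f x * (\<lambda>p. \<Sum>y\<in>X. g y * wedge X (ind x) (ind y) p) p) = wedge X f g p"
      proof (cases "u \<in> X \<and> v \<in> X")
        case True
        have i: "(\<Sum>y\<in>X. g y * wedge X (ind x) (ind y) (u, v)) =
                 (if x = u then g v else 0) - (if x = v then g u else 0)" if "x \<in> X" for x
        proof -
          have "(\<Sum>y\<in>X. g y * wedge X (ind x) (ind y) (u, v)) =
                (\<Sum>y\<in>X. (if x = u then (if y = v then g y else 0) else 0) - (if x = v then (if y = u then g y else 0) else 0))"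
            using True by (intro sum.cong) (auto simp: wedge_def ind_def)
          also have "\<dots> = (if x = u then g v else 0) - (if x = v then g u else 0)"
            using True assms by (simp add: sum_subtractf sum.delta' if_distrib[of "\<lambda>z. sum z _"])
          finally show ?thesis .
        qed
        have "(\<Sum>x\<in>X. f x * (\<lambda>p. \<Sum>y\<in>X. g y * wedge X (ind x) (ind y) p) (u, v)) =
              (\<Sum>x\<in>X. (if x = u then f x * g v else 0) - (if x = v then f x * g u else 0))"
          by (intro sum.cong refl) (simp add: i right_diff_distrib)
        also have "\<dots> = f u * g v - f v * g u"
          using True assms by (simp add: sum_subtractf sum.delta')
        also have "\<dots> = wedge X f g (u, v)" using True by (simp add: wedge_def)
        finally show ?thesis by (simp add: p)
      next
        case False
        have z: "wedge X a b (u, v) = 0" for a b using False unfolding wedge_def by auto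
        show ?thesis unfolding p z by simp
      qed
    qed
    ultimately show "wedge X f g \<in> zspan ?B" by simp
  qed
qed

lemma w2_act_wedge:
  assumes "f \<in> permmod X" "h \<in> permmod X"
  shows "w2_act X act g (wedge X f h) = wedge X (pm_act X act g f) (pm_act X act g h)"
  using assms by (auto simp: w2_act_def wedge_def pm_act_def permmod_def fun_eq_iff)


lemma face_cyclic:
  assumes HF: "H \<in> faces"
  shows "\<exists>h\<in>H. h \<noteq> id \<and> h ^^ 5 = id \<and> H = (\<lambda>k. h ^^ k) ` {..<5}"
proof -
  have sub: "H \<subseteq> Ico" and c5: "card H = 5" and idH: "id \<in> H"
    and cl: "\<And>a b. a \<in> H \<Longrightarrow> b \<in> H \<Longrightarrow> a \<circ> b \<in> H"
    using HF by (auto simp: faces_def)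
  have fin: "finite H" using c5 by (intro card_ge_0_finite) simp
  have bijH: "bij x" if "x \<in> H" for x
    using sub that by (auto simp: Ico_def intro: permutes_bij)
  define G where "G = \<lparr>carrier = H, monoid.mult = (\<circ>), one = (id :: nat \<Rightarrow> nat)\<rparr>"
  have grp: "group G"
  proof (rule groupI)
    fix x assume x: "x \<in> carrier G"
    then have xH: "x \<in> H" by (simp add: G_def)
    have "(\<lambda>y. y \<circ> x) ` H = H"
    proof (rule endo_inj_surj[OF fin])
      show "(\<lambda>y. y \<circ> x) ` H \<subseteq> H" using cl xH by auto
      show "inj_on (\<lambda>y. y \<circ> x) H"
      proof (rule inj_onI)
        fix y z assume e: "y \<circ> x = z \<circ> x"
        show "y = z"
        proof
          fix t
          have "x (Hilbert_Choice.inv x t) = t" using bijH[OF xH] by (simp add: bij_is_surj surj_f_inv_f)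
          then show "y t = z t" using e by (metis comp_apply)
        qed
      qed
    qed
    then have "id \<in> (\<lambda>y. y \<circ> x) ` H" using idH by simp
    then obtain y where "y \<in> H" "id = y \<circ> x" by blast
    then show "\<exists>y\<in>carrier G. y \<otimes>\<^bsub>G\<^esub> x = \<one>\<^bsub>G\<^esub>" by (intro bexI[of _ y]) (simp_all add: G_def)
  next
    fix x y assume "x \<in> carrier G" "y \<in> carrier G"
    then show "x \<otimes>\<^bsub>G\<^esub> y \<in> carrier G" using cl by (simp add: G_def)
  next
    show "\<one>\<^bsub>G\<^esub> \<in> carrier G" using idH by (simp add: G_def)
  next
    fix x y z
    show "x \<otimes>\<^bsub>G\<^esub> y \<otimes>\<^bsub>G\<^esub> z = x \<otimes>\<^bsub>G\<^esub> (y \<otimes>\<^bsub>G\<^esub> z)"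
      by (simp add: G_def comp_assoc)
  next
    fix x show "\<one>\<^bsub>G\<^esub> \<otimes>\<^bsub>G\<^esub> x = x" by (simp add: G_def)
  qed
  have pw: "x [^]\<^bsub>G\<^esub> (k::nat) = x ^^ k" for x k
  proof (induct k)
    case 0 then show ?case by (simp add: G_def)
  next
    case (Suc k)
    have "x [^]\<^bsub>G\<^esub> Suc k = x [^]\<^bsub>G\<^esub> k \<circ> x" by (simp add: G_def)
    also have "\<dots> = x ^^ Suc k" using Suc by (simp only: funpow_Suc_right)
    finally show ?case .
  qed
  have "H - {id} \<noteq> {}"
  proof
    assume "H - {id} = {}"
    then have "H \<subseteq> {id}" by blast
    then have "card H \<le> 1" using card_mono[of "{id}" H] by simp
    then show False using c5 by simp
  qed
  then obtain h where hH: "h \<in> H" and hid: "h \<noteq> id" by blast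
  have hG: "h \<in> carrier G" using hH by (simp add: G_def)
  have "group.ord G h dvd order G" using group.ord_dvd_group_order[OF grp hG] .
  then have d: "group.ord G h dvd 5" using c5 by (simp add: order_def G_def)
  have n1: "group.ord G h \<noteq> 1" using group.ord_eq_1[OF grp hG] hid by (simp add: G_def)
  have o5: "group.ord G h = 5"
  proof -
    have "group.ord G h \<le> 5" "group.ord G h > 0" using d by (simp_all add: dvd_imp_le) (metis dvd_0_left gr0I zero_neq_numeral)
    then have "group.ord G h \<in> {1,2,3,4,5}" by auto
    then show ?thesis using d n1 by auto
  qed
  have h5: "h ^^ 5 = id"
    using group.pow_ord_eq_1[OF grp hG] o5 pw by (simp add: G_def)
  have inj: "inj_on (\<lambda>k. h ^^ k) {..<5}"
  proof -
    have "inj_on (\<lambda>k. h [^]\<^bsub>G\<^esub> k) {0 .. group.ord G h - 1}" by (rule group.ord_inj[OF grp hG])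
    moreover have "{0 .. group.ord G h - 1} = {..<(5::nat)}" using o5 by auto
    ultimately show ?thesis using pw by simp
  qed
  have "(\<lambda>k. h ^^ k) ` {..<5} \<subseteq> H"
    using monoid.nat_pow_closed[OF group.is_monoid[OF grp] hG] pw by (auto simp: G_def)
  moreover have "card ((\<lambda>k. h ^^ k) ` {..<5}) = card H" using card_image[OF inj] c5 by simp
  ultimately have "(\<lambda>k. h ^^ k) ` {..<5} = H" using fin by (intro card_subset_eq)
  then show ?thesis using hH hid h5 by auto
qed


definition pl :: "nat list \<Rightarrow> nat \<Rightarrow> nat" where
  "pl xs i = (if i < length xs then xs ! i else i)"

fun tp :: "(nat \<times> nat) list \<Rightarrow> nat \<Rightarrow> nat" where
  "tp [] = id"
| "tp (p # ps) = transpose (fst p) (snd p) \<circ> tp ps"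

definition okp :: "(nat \<times> nat) list \<Rightarrow> bool" where
  "okp ps = list_all (\<lambda>p. fst p < 5 \<and> snd p < 5 \<and> fst p \<noteq> snd p) ps"

lemma okp_Cons [simp]: "okp (p # ps) = (fst p < 5 \<and> snd p < 5 \<and> fst p \<noteq> snd p \<and> okp ps)"
  by (simp add: okp_def)

lemma okp_Nil [simp]: "okp []" by (simp add: okp_def)

lemma okp_rev [simp]: "okp (rev ps) = okp ps"
  by (simp add: okp_def list_all_iff)

lemma tp_append: "tp (xs @ ys) = tp xs \<circ> tp ys"
  by (induct xs) (simp_all add: comp_assoc)

lemma tp_permutes: "okp ps \<Longrightarrow> tp ps permutes cubes"
proof (induct ps)
  case Nil then show ?case by (simp only: tp.simps permutes_id)
next
  case (Cons p ps)
  then have "transpose (fst p) (snd p) permutes cubes" by (intro permutes_swap_id) (auto simp: cubes_def)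
  with Cons show ?case unfolding tp.simps by (intro permutes_compose) simp_all
qed

lemma tp_perm: "okp ps \<Longrightarrow> permutation (tp ps)"
  using tp_permutes[of ps] by (auto simp: permutation_permutes cubes_def)

lemma tp_even: "okp ps \<Longrightarrow> evenperm (tp ps) = even (length ps)"
proof (induct ps)
  case Nil then show ?case by (simp only: tp.simps evenperm_id) simp
next
  case (Cons p ps)
  have "evenperm (tp (p # ps)) = (evenperm (transpose (fst p) (snd p)) = evenperm (tp ps))"
    unfolding tp.simps by (rule evenperm_comp[OF permutation_swap_id tp_perm]) (use Cons in simp)
  then show ?case using Cons by (simp only: evenperm_swap) simp
qed

lemma tp_Ico: "okp ps \<Longrightarrow> even (length ps) \<Longrightarrow> tp ps \<in> Ico"
  by (simp add: Ico_def tp_permutes tp_even)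

lemma tp_out: "okp ps \<Longrightarrow> 5 \<le> x \<Longrightarrow> tp ps x = x"
  by (induct ps) auto

lemma tp_rev: "tp ps \<circ> tp (rev ps) = id"
proof (induct ps)
  case Nil then show ?case by simp
next
  case (Cons p ps)
  have "tp (p # ps) \<circ> tp (rev (p # ps)) = transpose (fst p) (snd p) \<circ> (tp ps \<circ> tp (rev ps)) \<circ> transpose (fst p) (snd p)"
    by (simp add: tp_append comp_assoc)
  also have "\<dots> = id" by (simp only: Cons o_id transpose_comp_involutory)
  finally show ?case .
qed

lemma tp_inv: "Hilbert_Choice.inv (tp ps) = tp (rev ps)"
  using tp_rev[of ps] tp_rev[of "rev ps"] by (intro inv_unique_comp) simp_all

lemma pl_out: "length l = 5 \<Longrightarrow> 5 \<le> x \<Longrightarrow> pl l x = x"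
  by (simp add: pl_def)

lemma less5: "(x::nat) < 5 \<Longrightarrow> x = 0 \<or> x = 1 \<or> x = 2 \<or> x = 3 \<or> x = 4"
  by auto

lemma to_pl: "(\<And>x. 5 \<le> x \<Longrightarrow> f x = x) \<Longrightarrow> f = pl (map f [0,1,2,3,4])"
proof
  fix x assume o: "\<And>x. 5 \<le> x \<Longrightarrow> f x = x"
  show "f x = pl (map f [0,1,2,3,4]) x"
  proof (cases "x < 5")
    case True
    then show ?thesis using less5[OF True] by (auto simp: pl_def)
  next
    case False
    then show ?thesis using o by (simp add: pl_def)
  qed
qed

lemma pl_comp: "length a = length b \<Longrightarrow> pl a \<circ> pl b = pl (map (pl a) b)"
  by (auto simp: pl_def fun_eq_iff)

lemma pl_map: "map (pl a) [0..<length a] = a"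
  by (rule nth_equalityI) (simp_all add: pl_def)

lemma pl_inj: "length a = length b \<Longrightarrow> pl a = pl b \<Longrightarrow> a = b"
  using pl_map[of a] pl_map[of b] by metis

lemma pl_inj_on: "inj_on pl {l. length l = 5}"
  by (auto intro!: inj_onI pl_inj)

lemma pl_id: "pl [0,1,2,3,4] = id"
  using to_pl[of id] by simp

definition Ls :: "nat list list list" where "Ls = [[[0,1,2,3,4], [1,2,3,4,0], [2,3,4,0,1], [3,4,0,1,2], [4,0,1,2,3]], [[0,1,2,3,4], [1,2,4,0,3], [2,4,3,1,0], [3,0,1,4,2], [4,3,0,2,1]], [[0,1,2,3,4], [1,3,0,4,2], [2,0,4,1,3], [3,4,1,2,0], [4,2,3,0,1]], [[0,1,2,3,4], [1,3,4,2,0], [2,4,1,0,3], [3,2,0,4,1], [4,0,3,1,2]], [[0,1,2,3,4], [1,4,0,2,3], [2,0,3,4,1], [3,2,4,1,0], [4,3,1,0,2]], [[0,1,2,3,4], [1,4,3,0,2], [2,3,1,4,0], [3,0,4,2,1], [4,2,0,1,3]]]"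

definition L24 :: "nat list list" where "L24 = [[1,2,3,4,0], [1,2,4,0,3], [1,3,0,4,2], [1,3,4,2,0], [1,4,0,2,3], [1,4,3,0,2], [2,0,3,4,1], [2,0,4,1,3], [2,3,1,4,0], [2,3,4,0,1], [2,4,1,0,3], [2,4,3,1,0], [3,0,1,4,2], [3,0,4,2,1], [3,2,0,4,1], [3,2,4,1,0], [3,4,0,1,2], [3,4,1,2,0], [4,0,1,2,3], [4,0,3,1,2], [4,2,0,1,3], [4,2,3,0,1], [4,3,0,2,1], [4,3,1,0,2]]"

definition ftab :: "(nat \<times> nat \<times> (nat \<times> nat) list) list" where "ftab = [(0,1,[]), (0,2,[(0,1),(1,2),(2,3),(3,4)]), (0,3,[(0,1),(2,4)]), (0,4,[(0,2),(1,3),(2,4),(3,4)]), (0,5,[(1,4),(2,3)]), (1,0,[(0,3),(2,4)]), (1,2,[(1,4),(2,4)]), (1,3,[(0,1),(1,3)]), (1,4,[(1,2),(2,3)]), (1,5,[(0,2),(1,2),(2,4),(3,4)]), (2,0,[(1,2),(2,4)]), (2,1,[(0,2),(1,4),(2,3),(3,4)]), (2,3,[(2,3),(3,4)]), (2,4,[(0,1),(3,4)]), (2,5,[(0,1),(1,3),(2,4),(3,4)]), (3,0,[(0,2),(1,2),(2,3),(3,4)]), (3,1,[(1,3),(2,4)]), (3,2,[(0,2),(2,4)]), (3,4,[(0,1),(1,4),(2,3),(3,4)]), (3,5,[(1,2),(3,4)]), (4,0,[(1,3),(2,3)]), (4,1,[(0,1),(1,2),(2,4),(3,4)]), (4,2,[(0,3),(1,3),(2,4),(3,4)]),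 (4,3,[(1,4),(3,4)]), (4,5,[(0,2),(2,3)]), (5,0,[(0,1),(1,4)]), (5,1,[(0,1),(2,3)]), (5,2,[(1,3),(3,4)]), (5,3,[(0,3),(1,2),(2,4),(3,4)]), (5,4,[(2,4),(3,4)])]"

definition ctab :: "(nat \<times> nat \<times> (nat \<times> nat) list) list" where "ctab = [(0,1,[]), (0,2,[(1,2),(3,4)]), (0,3,[(1,3),(2,3)]), (0,4,[(1,4),(2,4)]), (1,0,[(0,1),(3,4)]), (1,2,[(0,1),(1,2)]), (1,3,[(0,1),(1,3),(2,3),(3,4)]), (1,4,[(0,1),(1,4),(2,4),(3,4)]), (2,0,[(0,2),(1,2)]), (2,1,[(0,2),(3,4)]), (2,3,[(0,2),(1,3)]), (2,4,[(0,2),(1,4)]), (3,0,[(0,3),(1,3),(2,3),(3,4)]), (3,1,[(0,3),(2,3)]), (3,2,[(0,3),(1,2),(2,3),(3,4)]), (3,4,[(0,3),(1,4),(2,3),(3,4)]), (4,0,[(0,4),(1,4),(2,4),(3,4)]), (4,1,[(0,4),(2,4)]), (4,2,[(0,4),(1,2),(2,4),(3,4)]), (4,3,[(0,4),(1,3),(2,4),(3,4)])]"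

definition f0tab :: "(nat list \<times> (nat \<times> nat) list) list" where "f0tab = [([0,1,2,3,4],[]), ([1,2,3,4,0],[(0,1),(1,2),(2,3),(3,4)]), ([2,3,4,0,1],[(0,2),(1,3),(2,4),(3,4)]), ([3,4,0,1,2],[(0,3),(1,4),(2,3),(3,4)]), ([4,0,1,2,3],[(0,4),(1,4),(2,4),(3,4)])]"

definition f1tab :: "(nat list \<times> (nat \<times> nat) list) list" where "f1tab = [([0,1,2,3,4],[]), ([1,2,4,0,3],[(0,1),(1,2),(2,4),(3,4)]), ([2,4,3,1,0],[(0,2),(1,4),(2,3),(3,4)]), ([3,0,1,4,2],[(0,3),(1,3),(2,3),(3,4)]), ([4,3,0,2,1],[(0,4),(1,3),(2,4),(3,4)])]"


lemma ctab_ok: "list_all (\<lambda>(i,j,ps). okp ps \<and> even (length ps) \<and> tp ps 0 = i \<and> tp ps 1 = j) ctab"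
  by (simp add: ctab_def transpose_def)

lemma ctab_cover: "list_all (\<lambda>i. list_all (\<lambda>j. i = j \<or> list_ex (\<lambda>(a,b,ps). a = i \<and> b = j) ctab) [0,1,2,3,4]) [0,1,2,3,4]"
  by (simp add: ctab_def)

lemma cube_trans:
  assumes "i < 5" "j < 5" "i \<noteq> j"
  shows "\<exists>g\<in>Ico. g 0 = i \<and> g 1 = j"
proof -
  have "i \<in> set [0,1,2,3,4]" "j \<in> set [0,1,2,3,4]" using less5[OF assms(1)] less5[OF assms(2)] by auto
  then have "list_ex (\<lambda>(a,b,ps). a = i \<and> b = j) ctab" using ctab_cover assms(3) by (simp only: list_all_iff) blast
  then obtain ps where ps: "(i, j, ps) \<in> set ctab" by (auto simp: list_ex_iff)
  then have "okp ps \<and> even (length ps) \<and> tp ps 0 = i \<and> tp ps 1 = j" using ctab_ok by (auto simp: list_all_iff)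
  then show ?thesis using tp_Ico by blast
qed

definition conjL :: "(nat \<times> nat) list \<Rightarrow> nat list list \<Rightarrow> nat list list" where
  "conjL ps L = map (\<lambda>l. map (tp ps \<circ> pl l \<circ> tp (rev ps)) [0,1,2,3,4]) L"

definition seteq :: "'a list \<Rightarrow> 'a list \<Rightarrow> bool" where
  "seteq A B = (list_all (\<lambda>x. x \<in> set B) A \<and> list_all (\<lambda>x. x \<in> set A) B)"

lemma seteqD: "seteq A B \<Longrightarrow> set A = set B"
  by (auto simp: seteq_def list_all_iff)

definition FS :: "nat \<Rightarrow> (nat \<Rightarrow> nat) set" where "FS j = pl ` set (Ls ! j)"

lemma act_conj:
  assumes "okp ps" "\<forall>l\<in>set L. length l = 5"
  shows "act_L (tp ps) (pl ` set L) = pl ` set (conjL ps L)"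
proof -
  have "act_L (tp ps) (pl ` set L) = (\<lambda>l. tp ps \<circ> pl l \<circ> tp (rev ps)) ` set L"
    by (simp add: act_L_def tp_inv image_image)
  also have "\<dots> = (\<lambda>l. pl (map (tp ps \<circ> pl l \<circ> tp (rev ps)) [0,1,2,3,4])) ` set L"
  proof (rule image_cong[OF refl])
    fix l assume "l \<in> set L"
    then have "length l = 5" using assms by auto
    then show "tp ps \<circ> pl l \<circ> tp (rev ps) = pl (map (tp ps \<circ> pl l \<circ> tp (rev ps)) [0,1,2,3,4])"
      using assms by (intro to_pl) (simp add: tp_out pl_out)
  qed
  also have "\<dots> = pl ` set (conjL ps L)" by (simp add: conjL_def image_image)
  finally show ?thesis .
qed

lemma ftab_ok: "list_all (\<lambda>(i,j,ps). okp ps \<and> even (length ps) \<and>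
   seteq (conjL ps (Ls!0)) (Ls!i) \<and> seteq (conjL ps (Ls!1)) (Ls!j)) ftab"
  by code_simp

lemma ftab_cover: "list_all (\<lambda>i. list_all (\<lambda>j. i = j \<or> list_ex (\<lambda>(a,b,ps). a = i \<and> b = j) ftab) [0,1,2,3,4,5]) [0,1,2,3,4,5]"
  by code_simp

lemma Ls_len: "list_all (\<lambda>L. list_all (\<lambda>l. length l = 5) L) Ls"
  by code_simp

lemma less6: "(x::nat) < 6 \<Longrightarrow> x \<in> set [0,1,2,3,4,5]"
  by auto

lemma face_trans:
  assumes "i < 6" "j < 6" "i \<noteq> j"
  shows "\<exists>g\<in>Ico. act_L g (FS 0) = FS i \<and> act_L g (FS 1) = FS j"
proof -
  have "list_ex (\<lambda>(a,b,ps). a = i \<and> b = j) ftab" using ftab_cover assms less6[OF assms(1)] less6[OF assms(2)]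
    by (simp only: list_all_iff) blast
  then obtain ps where ps: "(i, j, ps) \<in> set ftab" by (auto simp: list_ex_iff)
  then have ok: "okp ps" "even (length ps)" "seteq (conjL ps (Ls!0)) (Ls!i)" "seteq (conjL ps (Ls!1)) (Ls!j)"
    using ftab_ok by (auto simp: list_all_iff)
  have len: "\<forall>l\<in>set (Ls ! k). length l = 5" if "k < 6" for k
  proof -
    have "length Ls = 6" by code_simp
    then have "Ls ! k \<in> set Ls" using that by simp
    then show ?thesis using Ls_len by (simp add: list_all_iff)
  qed
  have "act_L (tp ps) (FS 0) = FS i" "act_L (tp ps) (FS 1) = FS j"
    unfolding FS_def using act_conj[OF ok(1) len] seteqD[OF ok(3)] seteqD[OF ok(4)] by simp_all
  then show ?thesis using tp_Ico[OF ok(1,2)] by blast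
qed

lemma face_mem:
  assumes "map fst tab = L" "list_all (\<lambda>(l,ps). okp ps \<and> even (length ps) \<and> map (tp ps) [0,1,2,3,4] = l) tab"
    "list_all (\<lambda>l. length l = 5) L" "distinct L" "length L = 5" "[0,1,2,3,4] \<in> set L"
    "list_all (\<lambda>a. list_all (\<lambda>b. map (pl a) b \<in> set L) L) L"
  shows "pl ` set L \<in> faces"
proof -
  have "pl l \<in> Ico" if "l \<in> set L" for l
  proof -
    have "l \<in> fst ` set tab" using that assms(1) by (metis set_map)
    then obtain ps where ps: "(l, ps) \<in> set tab" by force
    then have "okp ps" "even (length ps)" "map (tp ps) [0,1,2,3,4] = l" using assms(2) by (auto simp: list_all_iff)
    moreover have "tp ps = pl (map (tp ps) [0,1,2,3,4])" using \<open>okp ps\<close> by (intro to_pl) (simp add: tp_out)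
    ultimately show ?thesis using tp_Ico by metis
  qed
  then have s: "pl ` set L \<subseteq> Ico" by blast
  have "inj_on pl (set L)" using assms(3) by (intro inj_on_subset[OF pl_inj_on]) (auto simp: list_all_iff)
  then have c: "card (pl ` set L) = 5" using assms(4,5) by (simp add: card_image distinct_card)
  have i: "id \<in> pl ` set L" using assms(6) pl_id by force
  have "a \<circ> b \<in> pl ` set L" if ab0: "a \<in> pl ` set L" "b \<in> pl ` set L" for a b
  proof -
    obtain a' b' where ab: "a = pl a'" "b = pl b'" "a' \<in> set L" "b' \<in> set L" using ab0 by blast
    then have "length a' = length b'" using assms(3) by (auto simp: list_all_iff)
    then have "a \<circ> b = pl (map (pl a') b')" using ab pl_comp by simp
    moreover have "map (pl a') b' \<in> set L" using assms(7) ab by (auto simp: list_all_iff)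
    ultimately show ?thesis by blast
  qed
  then show ?thesis using s c i by (auto simp: faces_def)
qed

lemma FS0: "FS 0 \<in> faces"
  unfolding FS_def by (rule face_mem[of f0tab]; code_simp)

lemma FS1: "FS 1 \<in> faces"
  unfolding FS_def by (rule face_mem[of f1tab]; code_simp)

fun gen :: "nat \<Rightarrow> nat list list" where
  "gen 0 = [[]]"
| "gen (Suc n) = concat (map (\<lambda>ys. map (\<lambda>x. x # ys) (filter (\<lambda>x. x \<notin> set ys) [0,1,2,3,4])) (gen n))"

lemma gen_complete: "distinct xs \<Longrightarrow> set xs \<subseteq> {..<5} \<Longrightarrow> xs \<in> set (gen (length xs))"
proof (induct xs)
  case Nil then show ?case by simp
next
  case (Cons x xs)
  then have "xs \<in> set (gen (length xs))" "x \<notin> set xs" "x \<in> set [0,1,2,3,4]" using less5[of x] by auto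
  then show ?case by auto
qed

fun powl :: "nat list \<Rightarrow> nat \<Rightarrow> nat list" where
  "powl c 0 = [0,1,2,3,4]"
| "powl c (Suc k) = map (pl c) (powl c k)"

lemma powl: "length c = 5 \<Longrightarrow> pl c ^^ k = pl (powl c k) \<and> length (powl c k) = 5"
proof (induct k)
  case 0 then show ?case using pl_id by simp
next
  case (Suc k)
  then have "pl c ^^ Suc k = pl c \<circ> pl (powl c k)" by simp
  also have "\<dots> = pl (powl c (Suc k))" using Suc by (simp add: pl_comp)
  finally show ?case using Suc by simp
qed

lemma gen_check: "list_all (\<lambda>xs. list_all (\<lambda>i. pl xs (pl xs (pl xs (pl xs (pl xs i)))) = i) [0,1,2,3,4] \<longrightarrow>
   xs = [0,1,2,3,4] \<or> xs \<in> set L24) (gen 5)"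
  by code_simp

lemma L24_check: "list_all (\<lambda>c. length c = 5 \<and> list_ex (\<lambda>j. seteq (map (powl c) [0,1,2,3,4]) (Ls!j)) [0,1,2,3,4,5]) L24"
  by code_simp

lemma faces_sub:
  assumes "H \<in> faces"
  shows "\<exists>j<6. H = FS j"
proof -
  obtain h where hH: "h \<in> H" and hid: "h \<noteq> id" and h5: "h ^^ 5 = id" and HH: "H = (\<lambda>k. h ^^ k) ` {..<5}"
    using face_cyclic[OF assms] by blast
  have hp: "h permutes cubes" using hH assms by (auto simp: faces_def Ico_def)
  define xs where "xs = map h [0,1,2,3,4]"
  have hxs: "h = pl xs" unfolding xs_def
    by (rule to_pl) (use hp in \<open>auto simp: cubes_def intro: permutes_not_in\<close>)
  have inj: "inj_on h (set [0,1,2,3,4::nat])" using permutes_inj[OF hp] by (rule inj_on_subset) simp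
  have "distinct xs" unfolding xs_def distinct_map by (rule conjI[OF _ inj]) simp
  moreover have "set xs \<subseteq> {..<5}" unfolding xs_def using permutes_in_image[OF hp] by (auto simp: cubes_def)
  ultimately have g0: "xs \<in> set (gen (length xs))" by (rule gen_complete)
  have "length xs = 5" by (simp add: xs_def)
  with g0 have g: "xs \<in> set (gen 5)" by (simp only:)
  have "(h ^^ 5) i = i" for i using h5 by simp
  then have "h (h (h (h (h i)))) = i" for i by (simp add: numeral_eq_Suc)
  then have "list_all (\<lambda>i. pl xs (pl xs (pl xs (pl xs (pl xs i)))) = i) [0,1,2,3,4]" using hxs by simp
  moreover have "xs \<noteq> [0,1,2,3,4]" using hid hxs pl_id by auto
  ultimately have "xs \<in> set L24" using gen_check g by (auto simp: list_all_iff)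
  then have l5: "length xs = 5" and "list_ex (\<lambda>j. seteq (map (powl xs) [0,1,2,3,4]) (Ls!j)) [0,1,2,3,4,5]"
    using L24_check by (auto simp: list_all_iff)
  then obtain j where j0: "j \<in> set [0,1,2,3,4,5::nat]" and j2: "seteq (map (powl xs) [0,1,2,3,4]) (Ls!j)"
    unfolding list_ex_iff by blast
  have j: "j < 6" "seteq (map (powl xs) [0,1,2,3,4]) (Ls!j)" using j0 j2 by auto
  have "{..<5::nat} = set [0,1,2,3,4]" by auto
  then have "H = pl ` set (map (powl xs) [0,1,2,3,4])"
    unfolding HH hxs using powl[OF l5] by (simp add: image_image)
  also have "\<dots> = FS j" unfolding FS_def using seteqD[OF j(2)] by simp
  finally show ?thesis using j by blast
qed


lemma permmod_sub: "S \<subseteq> permmod X \<Longrightarrow> zspan S \<subseteq> permmod X"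
  by (rule zspan_closed_sub) (auto simp: permmod_def)

lemma pm_act_permmod: "pm_act X act g f \<in> permmod X"
  by (simp add: pm_act_def permmod_def)

lemma ind_permmod: "x \<in> X \<Longrightarrow> ind x \<in> permmod X"
  by (simp add: ind_def permmod_def)

lemma sumvec_permmod: "sumvec X \<in> permmod X"
  by (simp add: sumvec_def permmod_def)

lemma quot_lemma:
  assumes "M = zspan B" "Orb \<subseteq> M" "N \<subseteq> M" "B \<subseteq> zspan Orb"
  shows "zspan (Orb \<union> N) = M"
proof
  show "zspan (Orb \<union> N) \<subseteq> M" using assms(1-3) by (simp add: zspan_mono_span)
  have "M \<subseteq> zspan Orb" using assms(1,4) by (simp add: zspan_mono_span)
  also have "\<dots> \<subseteq> zspan (Orb \<union> N)" by (rule zspan_mono) blast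
  finally show "M \<subseteq> zspan (Orb \<union> N)" .
qed

lemma Ico_bij: "g \<in> Ico \<Longrightarrow> bij g"
  by (auto simp: Ico_def intro: permutes_bij)

lemma pmK: "g \<in> Ico \<Longrightarrow> pm_act cubes act_K g (ind a) = (\<lambda>x. if x \<in> cubes \<and> x = g a then 1 else 0)"
proof -
  assume g: "g \<in> Ico"
  have e: "Hilbert_Choice.inv g x = a \<longleftrightarrow> x = g a" for x using bij_inv_eq_iff[OF Ico_bij[OF g], of a x] by auto
  show ?thesis unfolding pm_act_def act_K_def ind_def
  proof (rule ext)
    fix x show "(if x \<in> cubes then if Hilbert_Choice.inv g x = a then 1 else 0 else 0) = (if x \<in> cubes \<and> x = g a then 1 else 0)"
      by (cases "x \<in> cubes") (simp_all only: e if_True if_False simp_thms)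
  qed
qed

lemma actL_cancel: "bij g \<Longrightarrow> act_L g (act_L (Hilbert_Choice.inv g) x) = x"
proof -
  assume b: "bij g"
  have "(\<lambda>h. g \<circ> h \<circ> Hilbert_Choice.inv g) \<circ> (\<lambda>h. Hilbert_Choice.inv g \<circ> h \<circ> Hilbert_Choice.inv (Hilbert_Choice.inv g)) = id"
    using b by (simp add: fun_eq_iff inv_inv_eq bij_is_inj bij_is_surj surj_f_inv_f)
  then show ?thesis unfolding act_L_def image_comp by simp
qed

lemma actL_cancel2: "bij g \<Longrightarrow> act_L (Hilbert_Choice.inv g) (act_L g x) = x"
proof -
  assume b: "bij g"
  have "(\<lambda>h. Hilbert_Choice.inv g \<circ> h \<circ> Hilbert_Choice.inv (Hilbert_Choice.inv g)) \<circ> (\<lambda>h. g \<circ> h \<circ> Hilbert_Choice.inv g) = id"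
    using b by (simp add: fun_eq_iff inv_inv_eq bij_is_inj bij_is_surj surj_f_inv_f)
  then show ?thesis unfolding act_L_def image_comp by simp
qed

lemma actL_inv: "bij g \<Longrightarrow> act_L (Hilbert_Choice.inv g) x = A \<longleftrightarrow> x = act_L g A"
  using actL_cancel actL_cancel2 by metis

lemma pmL: "g \<in> Ico \<Longrightarrow> pm_act faces act_L g (ind A) = (\<lambda>x. if x \<in> faces \<and> x = act_L g A then 1 else 0)"
proof -
  assume g: "g \<in> Ico"
  have e: "act_L (Hilbert_Choice.inv g) x = A \<longleftrightarrow> x = act_L g A" for x using actL_inv[OF Ico_bij[OF g]] .
  show ?thesis unfolding pm_act_def ind_def
  proof (rule ext)
    fix x show "(if x \<in> faces then if act_L (Hilbert_Choice.inv g) x = A then 1 else 0 else 0) = (if x \<in> faces \<and> x = act_L g A then 1 else 0)"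
      by (cases "x \<in> faces") (simp_all only: e if_True if_False simp_thms)
  qed
qed

lemma finite_cubes: "finite cubes" by (simp add: cubes_def)

lemma faces_finite: "finite faces"
proof -
  have "faces \<subseteq> FS ` {..<6}" using faces_sub by blast
  then show ?thesis by (rule finite_subset) simp
qed

lemma part1: "principal_quot Ico (pm_act cubes act_K) Vo_num Vo_den"
  unfolding principal_quot_def
proof (intro bexI)
  let ?O = "{pm_act cubes act_K g (ind 0) | g. g \<in> Ico}"
  show "ind 0 \<in> Vo_num" by (simp add: Vo_num_def ind_permmod cubes_def)
  show "zspan (?O \<union> Vo_den) = Vo_num"
  proof (rule quot_lemma)
    show "Vo_num = zspan {ind x | x. x \<in> cubes}" unfolding Vo_num_def by (rule permmod_span[OF finite_cubes])
    show "?O \<subseteq> Vo_num" by (auto simp: Vo_num_def pm_act_permmod)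
    show "Vo_den \<subseteq> Vo_num" unfolding Vo_den_def Vo_num_def by (rule permmod_sub) (simp add: sumvec_permmod)
    show "{ind x | x. x \<in> cubes} \<subseteq> zspan ?O"
    proof safe
      fix k assume k: "k \<in> cubes"
      then have k5: "k < 5" by (simp add: cubes_def)
      define j where "j = (if k = 1 then 2 else 1 :: nat)"
      have "j < 5" "k \<noteq> j" by (auto simp: j_def)
      then obtain g where g: "g \<in> Ico" "g 0 = k" using cube_trans[OF k5] by blast
      have "pm_act cubes act_K g (ind 0) = ind k" using pmK[OF g(1)] g(2) k by (auto simp: ind_def fun_eq_iff)
      then have "ind k \<in> ?O" using g(1) by force
      then show "ind k \<in> zspan ?O" by (rule zspan.gen)
    qed
  qed
qed

lemma wedge_orbit_cubes:
  assumes "g \<in> Ico" "x \<in> cubes" "y \<in> cubes" "g 0 = x" "g 1 = y"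
  shows "w2_act cubes act_K g (wedge cubes (ind 0) (ind 1)) = wedge cubes (ind x) (ind y)"
proof -
  have "w2_act cubes act_K g (wedge cubes (ind 0) (ind 1)) =
        wedge cubes (pm_act cubes act_K g (ind 0)) (pm_act cubes act_K g (ind 1))"
    by (rule w2_act_wedge) (simp_all add: ind_permmod cubes_def)
  also have "\<dots> = wedge cubes (ind x) (ind y)"
  proof -
    have p0: "pm_act cubes act_K g (ind 0) = (\<lambda>z. if z \<in> cubes \<and> z = x then 1 else 0)"
      using pmK[OF assms(1), of 0] assms(4) by simp
    have p1: "pm_act cubes act_K g (ind 1) = (\<lambda>z. if z \<in> cubes \<and> z = y then 1 else 0)"
      using pmK[OF assms(1), of 1] assms(5) by simp
    show ?thesis unfolding p0 p1 by (intro wedge_cong) (simp_all add: ind_def)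
  qed
  finally show ?thesis .
qed

lemma cubes_span_orbit:
  "{wedge cubes (ind x) (ind y) | x y. x \<in> cubes \<and> y \<in> cubes} \<subseteq>
     zspan {w2_act cubes act_K g (wedge cubes (ind 0) (ind 1)) | g. g \<in> Ico}"
proof safe
  fix x y assume xy: "x \<in> cubes" "y \<in> cubes"
  show "wedge cubes (ind x) (ind y) \<in> zspan {w2_act cubes act_K g (wedge cubes (ind 0) (ind 1)) | g. g \<in> Ico}"
  proof (cases "x = y")
    case True then show ?thesis by (simp add: wedge_self zspan.zero)
  next
    case False
    obtain g where g: "g \<in> Ico" "g 0 = x" "g 1 = y" using cube_trans[of x y] xy False by (auto simp: cubes_def)
    show ?thesis using wedge_orbit_cubes[OF g(1) xy g(2,3)] g(1) by (intro zspan.gen) force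
  qed
qed

lemma orbit_wedge2:
  "{w2_act X act g (wedge X (ind a) (ind b)) | g. g \<in> G} \<subseteq> wedge2 X" if "a \<in> X" "b \<in> X"
proof safe
  fix g
  have "w2_act X act g (wedge X (ind a) (ind b)) = wedge X (pm_act X act g (ind a)) (pm_act X act g (ind b))"
    using that by (intro w2_act_wedge ind_permmod)
  then show "w2_act X act g (wedge X (ind a) (ind b)) \<in> wedge2 X"
    unfolding wedge2_def by (auto intro!: zspan.gen pm_act_permmod)
qed

lemma den_wedge2: "zspan {wedge X (sumvec X) f | f. f \<in> permmod X} \<subseteq> wedge2 X"
  unfolding wedge2_def by (rule zspan_mono) (auto intro: sumvec_permmod)

lemma part23: "principal_mod Ico (w2_act cubes act_K) (wedge2 cubes)
       \<and> principal_quot Ico (w2_act cubes act_K) (wedge2 cubes) Eo_den"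
proof
  let ?v = "wedge cubes (ind 0) (ind 1)"
  let ?O = "{w2_act cubes act_K g ?v | g. g \<in> Ico}"
  have i01: "ind 0 \<in> permmod cubes" "ind 1 \<in> permmod cubes" by (simp_all add: ind_permmod cubes_def)
  have v: "?v \<in> wedge2 cubes" unfolding wedge2_def
    by (rule zspan.gen) (use i01 in blast)
  have O: "?O \<subseteq> wedge2 cubes" by (rule orbit_wedge2) (simp_all add: cubes_def)
  have M: "wedge2 cubes = zspan {wedge cubes (ind x) (ind y) | x y. x \<in> cubes \<and> y \<in> cubes}"
    by (rule wedge2_span[OF finite_cubes])
  have "zspan (?O \<union> {}) = wedge2 cubes"
    by (rule quot_lemma[OF M O _ cubes_span_orbit]) simp
  then show "principal_mod Ico (w2_act cubes act_K) (wedge2 cubes)"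
    unfolding principal_mod_def using v by auto
  have "zspan (?O \<union> Eo_den) = wedge2 cubes"
    by (rule quot_lemma[OF M O _ cubes_span_orbit]) (simp add: Eo_den_def den_wedge2)
  then show "principal_quot Ico (w2_act cubes act_K) (wedge2 cubes) Eo_den"
    unfolding principal_quot_def using v by auto
qed

lemma part4: "principal_quot Ico (pm_act faces act_L) Wo_num Wo_den"
  unfolding principal_quot_def
proof (intro bexI)
  let ?O = "{pm_act faces act_L g (ind (FS 0)) | g. g \<in> Ico}"
  show "ind (FS 0) \<in> Wo_num" by (simp add: Wo_num_def ind_permmod FS0)
  show "zspan (?O \<union> Wo_den) = Wo_num"
  proof (rule quot_lemma)
    show "Wo_num = zspan {ind x | x. x \<in> faces}" unfolding Wo_num_def by (rule permmod_span[OF faces_finite])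
    show "?O \<subseteq> Wo_num" by (auto simp: Wo_num_def pm_act_permmod)
    show "Wo_den \<subseteq> Wo_num" unfolding Wo_den_def Wo_num_def by (rule permmod_sub) (simp add: sumvec_permmod)
    show "{ind x | x. x \<in> faces} \<subseteq> zspan ?O"
    proof safe
      fix F assume F: "F \<in> faces"
      then obtain i where i: "i < 6" "F = FS i" using faces_sub by blast
      define j where "j = (if i = 1 then 2 else 1 :: nat)"
      have "j < 6" "i \<noteq> j" by (auto simp: j_def)
      then obtain g where g: "g \<in> Ico" "act_L g (FS 0) = FS i" using face_trans[OF i(1)] by blast
      have "pm_act faces act_L g (ind (FS 0)) = ind F" using pmL[OF g(1)] g(2) i F by (auto simp: ind_def fun_eq_iff)
      then have "ind F \<in> ?O" using g(1) by force
      then show "ind F \<in> zspan ?O" by (rule zspan.gen)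
    qed
  qed
qed

lemma part5: "principal_quot Ico (w2_act faces act_L) (wedge2 faces) W2o_den"
  unfolding principal_quot_def
proof (intro bexI)
  let ?v = "wedge faces (ind (FS 0)) (ind (FS 1))"
  let ?O = "{w2_act faces act_L g ?v | g. g \<in> Ico}"
  show "?v \<in> wedge2 faces" unfolding wedge2_def
    by (rule zspan.gen) (use ind_permmod[OF FS0] ind_permmod[OF FS1] in blast)
  show "zspan (?O \<union> W2o_den) = wedge2 faces"
  proof (rule quot_lemma)
    show "wedge2 faces = zspan {wedge faces (ind x) (ind y) | x y. x \<in> faces \<and> y \<in> faces}"
      by (rule wedge2_span[OF faces_finite])
    show "?O \<subseteq> wedge2 faces" by (rule orbit_wedge2[OF FS0 FS1])
    show "W2o_den \<subseteq> wedge2 faces" by (simp add: W2o_den_def den_wedge2)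
    show "{wedge faces (ind x) (ind y) | x y. x \<in> faces \<and> y \<in> faces} \<subseteq> zspan ?O"
    proof safe
      fix x y assume xy: "x \<in> faces" "y \<in> faces"
      show "wedge faces (ind x) (ind y) \<in> zspan ?O"
      proof (cases "x = y")
        case True then show ?thesis by (simp add: wedge_self zspan.zero)
      next
        case False
        obtain i where i: "i < 6" "x = FS i" using faces_sub xy by blast
        obtain j where j: "j < 6" "y = FS j" using faces_sub xy by blast
        have "i \<noteq> j" using False i j by blast
        then obtain g where g: "g \<in> Ico" "act_L g (FS 0) = FS i" "act_L g (FS 1) = FS j"
          using face_trans[OF i(1) j(1)] by blast
        have "w2_act faces act_L g ?v = wedge faces (pm_act faces act_L g (ind (FS 0))) (pm_act faces act_L g (ind (FS 1)))"
          by (rule w2_act_wedge[OF ind_permmod[OF FS0] ind_permmod[OF FS1]])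
        also have "\<dots> = wedge faces (ind x) (ind y)"
        proof -
          have p0: "pm_act faces act_L g (ind (FS 0)) = (\<lambda>z. if z \<in> faces \<and> z = x then 1 else 0)"
            using pmL[OF g(1), of "FS 0"] g(2) i(2) by simp
          have p1: "pm_act faces act_L g (ind (FS 1)) = (\<lambda>z. if z \<in> faces \<and> z = y then 1 else 0)"
            using pmL[OF g(1), of "FS 1"] g(3) j(2) by simp
          show ?thesis unfolding p0 p1 by (intro wedge_cong) (simp_all add: ind_def)
        qed
        finally show ?thesis using g(1) by (intro zspan.gen) force
      qed
    qed
  qed
qed

theorem proposition2p5:
  shows "principal_quot Ico (pm_act cubes act_K) Vo_num Vo_den
       \<and> principal_mod Ico (w2_act cubes act_K) (wedge2 cubes)
       \<and> principal_quot Ico (w2_act cubes act_K) (wedge2 cubes) Eo_den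
       \<and> principal_quot Ico (pm_act faces act_L) Wo_num Wo_den
       \<and> principal_quot Ico (w2_act faces act_L) (wedge2 faces) W2o_den"
  using part1 part23 part4 part5 by blast

end
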